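(* Let $M$ be an $n\times d$ matrix (a database). For every nonempty subset of columns $J\subseteq[d]$, every family of thresholds $\{t_j\}_{j\in J}\subseteq(0,1]$, and every $c\in(0,1)$, \[ Q_J\Big(c\prod_{j\in J} t_j\Big)\;\le\;\sum_{j\in J} Q_j(t_j)\;+\;c . \]
   Context: $M$ has $n$ rows (users) and $d$ columns (features); $M_{ij}$ is the value of feature $j$ for user $i$. For a column $j$, $V_j=\{M_{ij}: i\in[n]\}$, and for $J\subseteq[d]$, $V_J=\prod_{j\in J}V_j$. The empirical joint distribution of the columns $J$ is $p_J(v)=\frac{1}{n}\,|\{i\in[n]: M_{ij}=v_j \text{ for all } j\in J\}|$ for $v\in V_J$. The exposure of columns $J$ at threshold $t$ is \[ Q_J(t)=\sum_{v\in V_J} p_J(v)\,\mathbf 1[p_J(v)<t]. \] For a single column $j$, $Q_j:=Q_{\{j\}}$. *)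

theory Defs
  imports "HOL-Analysis.Analysis"
begin

text \<open>A database is an n x d matrix M, given as a function on row indices
  {0..<n} and column indices {0..<d}; entry M i j is the value of feature j for user i.\<close>

definition col_vals :: "(nat \<Rightarrow> nat \<Rightarrow> 'a) \<Rightarrow> nat \<Rightarrow> nat \<Rightarrow> 'a set" where
  "col_vals M n j = {M i j | i. i < n}"

definition joint_vals :: "(nat \<Rightarrow> nat \<Rightarrow> 'a) \<Rightarrow> nat \<Rightarrow> nat set \<Rightarrow> (nat \<Rightarrow> 'a) set" where
  "joint_vals M n J = (\<Pi>\<^sub>E j\<in>J. col_vals M n j)"

definition emp_prob :: "(nat \<Rightarrow> nat \<Rightarrow> 'a) \<Rightarrow> nat \<Rightarrow> nat set \<Rightarrow> (nat \<Rightarrow> 'a) \<Rightarrow> real" where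
  "emp_prob M n J v = real (card {i. i < n \<and> (\<forall>j\<in>J. M i j = v j)}) / real n"

definition exposure :: "(nat \<Rightarrow> nat \<Rightarrow> 'a) \<Rightarrow> nat \<Rightarrow> nat set \<Rightarrow> real \<Rightarrow> real" where
  "exposure M n J t =
     (\<Sum>v\<in>joint_vals M n J. emp_prob M n J v * (if emp_prob M n J v < t then 1 else 0))"

end

theory Submission
  imports Defs
begin

lemma card_sum_ind_nat: "card {i. i < (n::nat) \<and> Q i} = (\<Sum>i<n. if Q i then 1 else (0::nat))"
proof -
  have "card {i. i < n \<and> Q i} = card {i\<in>{..<n}. Q i}" by (rule arg_cong[where f=card]) auto
  also have "\<dots> = (\<Sum>i\<in>{i\<in>{..<n}. Q i}. 1::nat)" by simp
  also have "\<dots> = (\<Sum>i<n. if Q i then 1 else (0::nat))" by (rule sum.inter_filter) simp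
  finally show ?thesis .
qed

lemma card_sum_ind: "real (card {i. i < (n::nat) \<and> Q i}) = (\<Sum>i<n. if Q i then 1 else 0)"
  unfolding card_sum_ind_nat by (simp add: of_nat_sum if_distrib cong: if_cong)

lemma exposure_rows:
  assumes fJ: "finite J" and fin: "\<And>j. j \<in> J \<Longrightarrow> finite (col_vals M n j)"
  shows "exposure M n J T = real (card {i. i < n \<and> emp_prob M n J (restrict (M i) J) < T}) / real n"
proof -
  let ?V = "joint_vals M n J"
  let ?P = "emp_prob M n J"
  have fV: "finite ?V" unfolding joint_vals_def using fJ fin by (simp add: finite_PiE)
  have match: "(\<forall>j\<in>J. M i j = v j) \<longleftrightarrow> v = restrict (M i) J" if "v \<in> ?V" for i v
    using that unfolding joint_vals_def by (auto simp: PiE_iff extensional_def fun_eq_iff)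
  have Rin: "restrict (M i) J \<in> ?V" if "i < n" for i
    using that unfolding joint_vals_def col_vals_def by auto
  have "exposure M n J T = (\<Sum>v\<in>?V. \<Sum>i<n. if (\<forall>j\<in>J. M i j = v j) \<and> ?P v < T then 1 / real n else 0)"
    unfolding exposure_def
  proof (rule sum.cong[OF refl])
    fix v assume "v \<in> ?V"
    have "?P v = (\<Sum>i<n. if (\<forall>j\<in>J. M i j = v j) then 1 else 0) / real n"
      unfolding emp_prob_def by (simp only: card_sum_ind)
    thus "?P v * (if ?P v < T then 1 else 0) = (\<Sum>i<n. if (\<forall>j\<in>J. M i j = v j) \<and> ?P v < T then 1 / real n else 0)"
      by (auto simp: sum_divide_distrib intro!: sum.cong)
  qed
  also have "\<dots> = (\<Sum>i<n. \<Sum>v\<in>?V. if (\<forall>j\<in>J. M i j = v j) \<and> ?P v < T then 1 / real n else 0)"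
    by (rule sum.swap)
  also have "\<dots> = (\<Sum>i<n. if ?P (restrict (M i) J) < T then 1 / real n else 0)"
  proof (rule sum.cong[OF refl])
    fix i assume "i \<in> {..<n}"
    hence R: "restrict (M i) J \<in> ?V" using Rin by auto
    have "(\<Sum>v\<in>?V. if (\<forall>j\<in>J. M i j = v j) \<and> ?P v < T then 1 / real n else 0)
        = (\<Sum>v\<in>?V. if v = restrict (M i) J then (if ?P v < T then 1 / real n else 0) else 0)"
      by (rule sum.cong[OF refl]) (auto simp: match)
    also have "\<dots> = (if ?P (restrict (M i) J) < T then 1 / real n else 0)"
      using fV R by (simp add: sum.delta')
    finally show "(\<Sum>v\<in>?V. if (\<forall>j\<in>J. M i j = v j) \<and> ?P v < T then 1 / real n else 0)
        = (if ?P (restrict (M i) J) < T then 1 / real n else 0)" .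
  qed
  also have "\<dots> = real (card {i. i < n \<and> ?P (restrict (M i) J) < T}) / real n"
    by (simp only: card_sum_ind sum_divide_distrib) (auto intro!: sum.cong)
  finally show ?thesis .
qed

lemma col_vals_finite: "finite (col_vals M n j)"
proof -
  have "col_vals M n j = (\<lambda>i. M i j) ` {..<n}" unfolding col_vals_def by auto
  thus ?thesis by simp
qed

lemma colsum_le:
  fixes A :: "'a set"
  assumes "finite A"
  shows "(\<Sum>x\<in>A. card {k. k < n \<and> M k j = x}) \<le> n"
proof -
  have "(\<Sum>x\<in>A. card {k. k < n \<and> M k j = x}) = card (\<Union>x\<in>A. {k. k < n \<and> M k j = x})"
    by (rule card_UN_disjoint[symmetric]) (use assms in auto)
  also have "\<dots> \<le> card {..<n}" by (rule card_mono) auto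
  finally show ?thesis by simp
qed

theorem theorem2:
  fixes M :: "nat \<Rightarrow> nat \<Rightarrow> 'a" and n d :: nat
    and J :: "nat set" and t :: "nat \<Rightarrow> real" and c :: real
  assumes "J \<subseteq> {0..<d}" and "J \<noteq> {}"
    and "\<forall>j\<in>J. 0 < t j \<and> t j \<le> 1"
    and "0 < c" and "c < 1"
  shows "exposure M n J (c * (\<Prod>j\<in>J. t j)) \<le> (\<Sum>j\<in>J. exposure M n {j} (t j)) + c"
proof -
  have fJ: "finite J" using assms(1) finite_subset by blast
  define T where "T = c * (\<Prod>j\<in>J. t j)"
  define cJ where "cJ i = card {k. k < n \<and> (\<forall>j\<in>J. M k j = M i j)}" for i
  define c1 where "c1 j i = card {k. k < n \<and> M k j = M i j}" for j i
  have eJ: "emp_prob M n J (restrict (M i) J) = cJ i / n" for i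
    unfolding emp_prob_def cJ_def by (rule arg_cong2[where f="(/)"], rule arg_cong[where f="\<lambda>x. real (card x)"]) auto
  have e1: "emp_prob M n {j} (restrict (M i) {j}) = c1 j i / n" for i j
    unfolding emp_prob_def c1_def by simp
  define B where "B = {i. i < n \<and> cJ i / n < T}"
  define Bj where "Bj j = {i. i < n \<and> c1 j i / n < t j}" for j
  define G where "G = {i. i < n \<and> cJ i / n < T \<and> (\<forall>j\<in>J. \<not> c1 j i / n < t j)}"
  have expJ: "exposure M n J T = card B / n"
    unfolding exposure_rows[OF fJ col_vals_finite] B_def eJ ..
  have exp1: "exposure M n {j} (t j) = card (Bj j) / n" for j
    using exposure_rows[of "{j}" M n "t j"] col_vals_finite unfolding Bj_def e1 by blast
  have sub: "B \<subseteq> (\<Union>j\<in>J. Bj j) \<union> G" unfolding B_def Bj_def G_def by auto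
  have fBj: "finite (Bj j)" for j unfolding Bj_def by simp
  have fG: "finite G" unfolding G_def by simp
  have cardB: "card B \<le> (\<Sum>j\<in>J. card (Bj j)) + card G"
  proof -
    have "card B \<le> card ((\<Union>j\<in>J. Bj j) \<union> G)" by (rule card_mono) (use fJ fBj fG sub in auto)
    also have "\<dots> \<le> card (\<Union>j\<in>J. Bj j) + card G" by (rule card_Un_le)
    also have "card (\<Union>j\<in>J. Bj j) \<le> (\<Sum>j\<in>J. card (Bj j))" by (rule card_UN_le[OF fJ])
    finally show ?thesis by simp
  qed
  have cardG: "real (card G) \<le> c * n"
  proof -
    define R where "R i = restrict (M i) J" for i
    define W where "W = R ` G"
    define F where "F w = {k. k < n \<and> R k = w}" for w
    define A where "A j = (\<lambda>i. M i j) ` G" for j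
    have fW: "finite W" unfolding W_def using fG by simp
    have fA: "finite (A j)" for j unfolding A_def using fG by simp
    have Req: "R k = R g \<longleftrightarrow> (\<forall>j\<in>J. M k j = M g j)" for k g
      unfolding R_def by (auto simp: fun_eq_iff restrict_def)
    have FR: "F (R g) = {k. k < n \<and> (\<forall>j\<in>J. M k j = M g j)}" for g
      unfolding F_def using Req by auto
    have Fle: "real (card (F w)) \<le> T * n" if "w \<in> W" for w
    proof -
      obtain g where g: "g \<in> G" "w = R g" using \<open>w \<in> W\<close> W_def by auto
      have "card (F w) = cJ g" using FR g(2) cJ_def by simp
      moreover have "cJ g / n < T" and "n > 0" using g(1) G_def by auto
      ultimately show ?thesis by (simp add: divide_less_eq)
    qed
    have "card G \<le> card (\<Union>w\<in>W. F w)"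
      by (rule card_mono) (auto simp: F_def W_def G_def)
    also have "\<dots> \<le> (\<Sum>w\<in>W. card (F w))" by (rule card_UN_le[OF fW])
    finally have "real (card G) \<le> (\<Sum>w\<in>W. real (card (F w)))"
      by (metis of_nat_le_iff of_nat_sum)
    also have "\<dots> \<le> (\<Sum>w\<in>W. T * n)" by (rule sum_mono) (rule Fle)
    also have "\<dots> = card W * T * n" by simp
    finally have G1: "real (card G) \<le> card W * T * n" .
    have "W \<subseteq> Pi\<^sub>E J A" unfolding W_def A_def R_def by auto
    hence "card W \<le> card (Pi\<^sub>E J A)" by (rule card_mono[rotated]) (simp add: finite_PiE fJ fA)
    also have "\<dots> = (\<Prod>j\<in>J. card (A j))" by (rule card_PiE[OF fJ])
    finally have W1: "real (card W) \<le> (\<Prod>j\<in>J. real (card (A j)))"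
      by (metis of_nat_le_iff of_nat_prod)
    have Aj: "real (card (A j)) * t j \<le> 1" if "j \<in> J" for j
    proof (cases "n = 0")
      case True
      hence "G = {}" unfolding G_def by simp
      thus ?thesis by (simp add: A_def)
    next
      case False
      have ge: "t j * n \<le> real (card {k. k < n \<and> M k j = x})" if "x \<in> A j" for x
      proof -
        obtain g where g: "g \<in> G" "x = M g j" using \<open>x \<in> A j\<close> A_def by auto
        have "\<not> c1 j g / n < t j" using g(1) \<open>j \<in> J\<close> G_def by auto
        thus ?thesis using False g(2) c1_def by (simp add: not_less le_divide_eq)
      qed
      have "real (card (A j)) * (t j * n) = (\<Sum>x\<in>A j. t j * n)" by simp
      also have "\<dots> \<le> (\<Sum>x\<in>A j. real (card {k. k < n \<and> M k j = x}))"
        by (rule sum_mono) (rule ge)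
      also have "\<dots> \<le> n" using colsum_le[OF fA, of n M j] by (metis of_nat_le_iff of_nat_sum)
      finally show ?thesis using False by (simp add: mult.assoc[symmetric] mult_le_cancel_right1)
    qed
    have tpos: "\<And>j. j \<in> J \<Longrightarrow> 0 < t j" using assms(3) by auto
    have "real (card W) * (\<Prod>j\<in>J. t j) \<le> (\<Prod>j\<in>J. real (card (A j))) * (\<Prod>j\<in>J. t j)"
      using W1 tpos by (intro mult_right_mono prod_nonneg) (auto intro: less_imp_le)
    also have "\<dots> = (\<Prod>j\<in>J. real (card (A j)) * t j)" by (simp add: prod.distrib)
    also have "\<dots> \<le> 1" using Aj tpos by (intro prod_le_1) (auto simp: less_imp_le)
    finally have "real (card W) * (\<Prod>j\<in>J. t j) \<le> 1" .
    hence "c * (real (card W) * (\<Prod>j\<in>J. t j)) * n \<le> c * 1 * n"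
      using assms(4) by (intro mult_right_mono mult_left_mono) auto
    thus ?thesis using G1 unfolding T_def by (simp add: algebra_simps)
  qed
  show ?thesis
  proof (cases "n = 0")
    case True
    thus ?thesis using expJ exp1 assms(4) T_def by simp
  next
    case False
    hence np: "real n > 0" by simp
    have "exposure M n J T = card B / n" by (rule expJ)
    also have "\<dots> \<le> ((\<Sum>j\<in>J. real (card (Bj j))) + c * n) / n"
    proof (rule divide_right_mono)
      have "real (card B) \<le> real ((\<Sum>j\<in>J. card (Bj j)) + card G)" using cardB by (simp only: of_nat_le_iff)
      also have "\<dots> = (\<Sum>j\<in>J. real (card (Bj j))) + real (card G)" by simp
      finally show "real (card B) \<le> (\<Sum>j\<in>J. real (card (Bj j))) + c * n" using cardG by linarith
    qed simp
    also have "\<dots> = (\<Sum>j\<in>J. exposure M n {j} (t j)) + c"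
      using np by (simp add: exp1 add_divide_distrib sum_divide_distrib)
    finally show ?thesis unfolding T_def .
  qed
qed

end
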